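(* Let $G=\langle A,B\rangle$ be an abstract rank one group with unipotent subgroups $A,B$ and $V$ a $\mathbb{Z}G$-module with $[V,A,A,A]=0$, $[V,G,G,G]\neq0$, $[V,G]=V$ and $C_V(G)=0$, and suppose $A_0:=C_A([V,A])\cap C_A(V/C_V(A))\neq1$. Then: (a) $V=C_V(A)\oplus[V,B]$; (b) $C_V(A)=[V,A_0]=[V,a]$ for all $a\in A_0\setminus\{1\}$; (c) $[V,A]=C_V(a)$ for all $a\in A_0\setminus\{1\}$; (d) if $A$ is not abelian, then $C_V(A)=[V,A,A]$.
   Context: $G$ acts on $V$ on the right, $[v,g]=-v+vg$; $[X,Y]$ is the subgroup generated by all such commutators, $[X,Y,Z]=[[X,Y],Z]$. Abstract rank one group with unipotent subgroups $A,B$: $G=\langle A,B\rangle$, $A\neq B$ nilpotent, for each $a\in A\setminus\{1\}$ there is $b\in B\setminus\{1\}$ with $B^a=A^b$, and for each $b\in B\setminus\{1\}$ some $a\in A\setminus\{1\}$ with $A^b=B^a$. *)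

theory Defs
  imports "HOL-Algebra.Algebra"
begin

definition grp_comm_set :: "('g, 'b) monoid_scheme \<Rightarrow> 'g set \<Rightarrow> 'g set \<Rightarrow> 'g set" where
  "grp_comm_set G S1 Y = {monoid.mult G (monoid.mult G (monoid.mult G (m_inv G x) (m_inv G y)) x) y | x y. x \<in> S1 \<and> y \<in> Y}"

fun lower_central :: "('g, 'b) monoid_scheme \<Rightarrow> 'g set \<Rightarrow> nat \<Rightarrow> 'g set" where
  "lower_central G H 0 = H"
| "lower_central G H (Suc n) = generate G (grp_comm_set G (lower_central G H n) H)"

definition nilpotent_subgroup :: "('g, 'b) monoid_scheme \<Rightarrow> 'g set \<Rightarrow> bool" where
  "nilpotent_subgroup G H \<longleftrightarrow> subgroup H G \<and> (\<exists>n. lower_central G H n = {monoid.one G})"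

definition conj_set :: "('g, 'b) monoid_scheme \<Rightarrow> 'g set \<Rightarrow> 'g \<Rightarrow> 'g set" where
  "conj_set G S1 g = (\<lambda>x. monoid.mult G (monoid.mult G (m_inv G g) x) g) ` S1"

definition rank_one_group :: "('g, 'b) monoid_scheme \<Rightarrow> 'g set \<Rightarrow> 'g set \<Rightarrow> bool" where
  "rank_one_group G A B \<longleftrightarrow> group G \<and> subgroup A G \<and> subgroup B G \<and>
     generate G (A \<union> B) = carrier G \<and> A \<noteq> B \<and>
     nilpotent_subgroup G A \<and> nilpotent_subgroup G B \<and>
     (\<forall>a \<in> A - {monoid.one G}. \<exists>b \<in> B - {monoid.one G}. conj_set G B a = conj_set G A b) \<and>
     (\<forall>b \<in> B - {monoid.one G}. \<exists>a \<in> A - {monoid.one G}. conj_set G A b = conj_set G B a)"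

text \<open>V (the whole type 'v) is a ZG-module with right action act.\<close>
definition ZG_module :: "('g, 'b) monoid_scheme \<Rightarrow> ('v::ab_group_add \<Rightarrow> 'g \<Rightarrow> 'v) \<Rightarrow> bool" where
  "ZG_module G act \<longleftrightarrow>
     (\<forall>v. act v (monoid.one G) = v) \<and>
     (\<forall>v. \<forall>g \<in> carrier G. \<forall>h \<in> carrier G. act (act v g) h = act v (monoid.mult G g h)) \<and>
     (\<forall>v w. \<forall>g \<in> carrier G. act (v + w) g = act v g + act w g)"

definition add_subgroup :: "'v::ab_group_add set \<Rightarrow> bool" where
  "add_subgroup H \<longleftrightarrow> 0 \<in> H \<and> (\<forall>x\<in>H. \<forall>y\<in>H. x + y \<in> H) \<and> (\<forall>x\<in>H. - x \<in> H)"

definition add_span :: "'v::ab_group_add set \<Rightarrow> 'v set" where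
  "add_span S = \<Inter>{H. add_subgroup H \<and> S \<subseteq> H}"

text \<open>[S1,Y] = subgroup generated by all [v,g] = -v + vg, v in S1, g in Y.\<close>
definition mcomm :: "('v::ab_group_add \<Rightarrow> 'g \<Rightarrow> 'v) \<Rightarrow> 'v set \<Rightarrow> 'g set \<Rightarrow> 'v set" where
  "mcomm act S1 Y = add_span {- v + act v g | v g. v \<in> S1 \<and> g \<in> Y}"

text \<open>Centralizer C_X(Y) of group elements Y in a subset S1 of V.\<close>
definition fixed :: "('v \<Rightarrow> 'g \<Rightarrow> 'v) \<Rightarrow> 'v set \<Rightarrow> 'g set \<Rightarrow> 'v set" where
  "fixed act S1 Y = {v \<in> S1. \<forall>g \<in> Y. act v g = v}"

text \<open>C_A(W) for W a subset of V: elements of A acting trivially on W.\<close>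
definition centr_on :: "('v \<Rightarrow> 'g \<Rightarrow> 'v) \<Rightarrow> 'g set \<Rightarrow> 'v set \<Rightarrow> 'g set" where
  "centr_on act A W = {a \<in> A. \<forall>w \<in> W. act w a = w}"

text \<open>C_A(V/U) for U a subgroup of V: elements of A acting trivially on V/U.\<close>
definition centr_quot :: "('v::ab_group_add \<Rightarrow> 'g \<Rightarrow> 'v) \<Rightarrow> 'g set \<Rightarrow> 'v set \<Rightarrow> 'g set" where
  "centr_quot act A U = {a \<in> A. \<forall>v. act v a - v \<in> U}"

end

theory Submission
  imports Defs
begin

lemma (in group) inv_cancel_l1 [simp]: "x \<in> carrier G \<Longrightarrow> y \<in> carrier G \<Longrightarrow> inv x \<otimes> (x \<otimes> y) = y"
  by (simp add: m_assoc[symmetric])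
lemma (in group) inv_cancel_l2 [simp]: "x \<in> carrier G \<Longrightarrow> y \<in> carrier G \<Longrightarrow> x \<otimes> (inv x \<otimes> y) = y"
  by (simp add: m_assoc[symmetric])

lemma add_span_least: "add_subgroup H \<Longrightarrow> S \<subseteq> H \<Longrightarrow> add_span S \<subseteq> H"
  unfolding add_span_def by blast
lemma add_span_inc: "S \<subseteq> add_span S"
  unfolding add_span_def by blast
lemma add_span_sub: "add_subgroup (add_span S)"
  unfolding add_span_def add_subgroup_def by blast

lemma mcomm_least:
  assumes "add_subgroup W" "\<And>v g. v \<in> S \<Longrightarrow> g \<in> Y \<Longrightarrow> - v + act v g \<in> W"
  shows "mcomm act S Y \<subseteq> W"
  unfolding mcomm_def using assms by (intro add_span_least) auto

lemma mcomm_least':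
  assumes W: "add_subgroup W" and h: "\<And>v g. v \<in> S \<Longrightarrow> g \<in> Y \<Longrightarrow> act v g - v \<in> W"
  shows "mcomm act S Y \<subseteq> W"
proof (rule mcomm_least[OF W])
  fix v g assume "v \<in> S" "g \<in> Y"
  then have "act v g - v \<in> W" by (rule h)
  moreover have "act v g - v = - v + act v g" by (simp only: diff_conv_add_uminus add.commute)
  ultimately show "- v + act v g \<in> W" by metis
qed

lemma mcomm_in: "v \<in> S \<Longrightarrow> g \<in> Y \<Longrightarrow> - v + act v g \<in> mcomm act S Y"
  unfolding mcomm_def by (rule subsetD[OF add_span_inc]) blast

lemma mcomm_in': "act v g - v \<in> mcomm act S Y" if "v \<in> S" "g \<in> Y"
proof -
  have "- v + act v g \<in> mcomm act S Y" using that by (rule mcomm_in)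
  moreover have "act v g - v = - v + act v g" by (simp only: diff_conv_add_uminus add.commute)
  ultimately show ?thesis by metis
qed

lemma mcomm_sub: "add_subgroup (mcomm act S Y)"
  unfolding mcomm_def by (rule add_span_sub)

lemma mcomm_mono: "mcomm act S Y \<subseteq> mcomm act S Y'" if "Y \<subseteq> Y'"
proof (rule mcomm_least[OF mcomm_sub])
  fix v g assume "v \<in> S" "g \<in> Y"
  then show "- v + act v g \<in> mcomm act S Y'" using that by (intro mcomm_in) auto
qed

lemma add_subgroup_sum:
  assumes "add_subgroup P" "add_subgroup Q"
  shows "add_subgroup {u + z | u z. u \<in> P \<and> z \<in> Q}"
proof -
  have P: "0 \<in> P" "\<And>x y. x \<in> P \<Longrightarrow> y \<in> P \<Longrightarrow> x + y \<in> P" "\<And>x. x \<in> P \<Longrightarrow> - x \<in> P"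
    using assms(1) unfolding add_subgroup_def by auto
  have Q: "0 \<in> Q" "\<And>x y. x \<in> Q \<Longrightarrow> y \<in> Q \<Longrightarrow> x + y \<in> Q" "\<And>x. x \<in> Q \<Longrightarrow> - x \<in> Q"
    using assms(2) unfolding add_subgroup_def by auto
  show ?thesis unfolding add_subgroup_def
  proof (intro conjI ballI)
    show "0 \<in> {u + z | u z. u \<in> P \<and> z \<in> Q}" using P(1) Q(1) by (auto intro!: exI[of _ 0])
  next
    fix x y assume "x \<in> {u + z | u z. u \<in> P \<and> z \<in> Q}" "y \<in> {u + z | u z. u \<in> P \<and> z \<in> Q}"
    then obtain u1 z1 u2 z2 where "x = u1 + z1" "y = u2 + z2" "u1 \<in> P" "u2 \<in> P" "z1 \<in> Q" "z2 \<in> Q" by blast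
    then have "x + y = (u1 + u2) + (z1 + z2)" "u1 + u2 \<in> P" "z1 + z2 \<in> Q" using P Q by (auto simp: algebra_simps)
    then show "x + y \<in> {u + z | u z. u \<in> P \<and> z \<in> Q}" by blast
  next
    fix x assume "x \<in> {u + z | u z. u \<in> P \<and> z \<in> Q}"
    then obtain u1 z1 where "x = u1 + z1" "u1 \<in> P" "z1 \<in> Q" by blast
    then have "- x = (- u1) + (- z1)" "- u1 \<in> P" "- z1 \<in> Q" using P Q by auto
    then show "- x \<in> {u + z | u z. u \<in> P \<and> z \<in> Q}" by blast
  qed
qed

lemma add_sub_diff: "add_subgroup W \<Longrightarrow> x \<in> W \<Longrightarrow> y \<in> W \<Longrightarrow> x - y \<in> W"
  unfolding add_subgroup_def diff_conv_add_uminus by blast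

locale rmod = group G for G :: "('g,'b) monoid_scheme" (structure) +
  fixes act :: "'v::ab_group_add \<Rightarrow> 'g \<Rightarrow> 'v"
  assumes zg: "ZG_module G act"
begin

lemma act_one [simp]: "act v \<one> = v"
  using zg unfolding ZG_module_def by simp
lemma act_mult: "g \<in> carrier G \<Longrightarrow> h \<in> carrier G \<Longrightarrow> act v (g \<otimes> h) = act (act v g) h"
  using zg unfolding ZG_module_def by simp
lemma act_add: "g \<in> carrier G \<Longrightarrow> act (v + w) g = act v g + act w g"
  using zg unfolding ZG_module_def by simp
lemma act_zero [simp]: "g \<in> carrier G \<Longrightarrow> act 0 g = 0"
  using act_add[of g 0 0] by simp
lemma act_minus: "act (- v) g = - act v g" if "g \<in> carrier G"
proof -
  have "act v g + act (- v) g = 0" using act_add[of g v "-v"] that by simp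
  then show ?thesis by (metis minus_unique)
qed
lemma act_diff: "g \<in> carrier G \<Longrightarrow> act (v - w) g = act v g - act w g"
  by (metis diff_conv_add_uminus act_add act_minus)
lemma act_inv1 [simp]: "g \<in> carrier G \<Longrightarrow> act (act v (inv g)) g = v"
  by (metis act_mult act_one inv_closed l_inv)
lemma act_inv2 [simp]: "g \<in> carrier G \<Longrightarrow> act (act v g) (inv g) = v"
  by (metis act_mult act_one inv_closed r_inv)

lemma comm_subgroup:
  assumes W: "add_subgroup W"
  shows "subgroup {g \<in> carrier G. \<forall>v. act v g - v \<in> W} G"
proof (rule subgroupI)
  have W0: "0 \<in> W" and Wp: "\<And>x y. x \<in> W \<Longrightarrow> y \<in> W \<Longrightarrow> x + y \<in> W"
    and Wm: "\<And>x. x \<in> W \<Longrightarrow> - x \<in> W"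
    using W unfolding add_subgroup_def by auto
  show "{g \<in> carrier G. \<forall>v. act v g - v \<in> W} \<noteq> {}"
    using W0 by (auto intro!: exI[of _ \<one>])
  fix a assume a: "a \<in> {g \<in> carrier G. \<forall>v. act v g - v \<in> W}"
  then have ac: "a \<in> carrier G" and aW: "\<And>v. act v a - v \<in> W" by auto
  show "inv a \<in> {g \<in> carrier G. \<forall>v. act v g - v \<in> W}"
  proof (safe)
    fix v
    have "act (act v (inv a)) a - act v (inv a) \<in> W" by (rule aW)
    then have "v - act v (inv a) \<in> W" using ac by simp
    then have "- (v - act v (inv a)) \<in> W" by (rule Wm)
    then show "act v (inv a) - v \<in> W" by simp
  qed (use ac in simp)
next
  have Wp: "\<And>x y. x \<in> W \<Longrightarrow> y \<in> W \<Longrightarrow> x + y \<in> W"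
    using W unfolding add_subgroup_def by auto
  fix a b assume a: "a \<in> {g \<in> carrier G. \<forall>v. act v g - v \<in> W}"
    and b: "b \<in> {g \<in> carrier G. \<forall>v. act v g - v \<in> W}"
  then have ac: "a \<in> carrier G" and aW: "\<And>v. act v a - v \<in> W"
    and bc: "b \<in> carrier G" and bW: "\<And>v. act v b - v \<in> W" by auto
  show "a \<otimes> b \<in> {g \<in> carrier G. \<forall>v. act v g - v \<in> W}"
  proof (safe)
    fix v
    have "(act (act v a) b - act v a) + (act v a - v) \<in> W" by (rule Wp[OF bW aW])
    moreover have "(act (act v a) b - act v a) + (act v a - v) = act v (a \<otimes> b) - v"
      using ac bc by (simp add: act_mult)
    ultimately show "act v (a \<otimes> b) - v \<in> W" by simp
  qed (use ac bc in simp)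
qed auto

lemma fix_subgroup: "subgroup {g \<in> carrier G. act x g = x} G"
proof (rule subgroupI)
  fix a assume a: "a \<in> {g \<in> carrier G. act x g = x}"
  then show "inv a \<in> {g \<in> carrier G. act x g = x}"
    by (metis (mono_tags, lifting) act_inv2 inv_closed mem_Collect_eq)
qed (auto simp: act_mult)

lemma fixed_sub: "Y \<subseteq> carrier G \<Longrightarrow> add_subgroup (fixed act UNIV Y)"
  unfolding add_subgroup_def fixed_def by (auto simp: act_add act_minus subset_iff)


lemma act_conj: "p \<in> carrier G \<Longrightarrow> x \<in> carrier G \<Longrightarrow> act v (p \<otimes> x \<otimes> inv p) = act (act (act v p) x) (inv p)"
  by (simp add: act_mult)

lemma comm_identity:
  fixes w :: 'v
  assumes x: "x \<in> carrier G" and y: "y \<in> carrier G"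
  defines "w' \<equiv> act w (inv x \<otimes> inv y)"
  shows "act w (inv x \<otimes> inv y \<otimes> x \<otimes> y) - w
     = (act (act w' x - w') y - (act w' x - w')) - (act (act w' y - w') x - (act w' y - w'))"
proof -
  have c1: "act (act w' x) y = act w (inv x \<otimes> inv y \<otimes> x \<otimes> y)"
    unfolding w'_def using x y by (simp add: act_mult)
  have c2: "act (act w' y) x = w"
  proof -
    have "act (act w' y) x = act w (inv x \<otimes> inv y \<otimes> y \<otimes> x)"
      unfolding w'_def using x y by (simp add: act_mult)
    also have "inv x \<otimes> inv y \<otimes> y \<otimes> x = \<one>" using x y by (simp add: m_assoc)
    finally show ?thesis by simp
  qed
  show ?thesis using x y by (simp add: act_diff c1 c2 algebra_simps)
qed

end

lemma rank_one_sym: "rank_one_group G A B \<Longrightarrow> rank_one_group G B A"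
  unfolding rank_one_group_def by (auto simp: Un_commute)

lemma (in group) gen_from:
  assumes sA: "subgroup A G" and sB: "subgroup B G" and gen: "generate G (A \<union> B) = carrier G"
    and sS: "subgroup S G" and BS: "B \<subseteq> S" and a: "a \<in> A" "a \<in> S" and b: "b \<in> B"
    and cj: "conj_set G B a = conj_set G A b"
  shows "carrier G \<subseteq> S"
proof -
  have AS: "A \<subseteq> S"
  proof
    fix x assume x: "x \<in> A"
    have carr: "x \<in> carrier G" "a \<in> carrier G" "b \<in> carrier G"
      using sA sB x a b subgroup.subset by blast+
    have "inv b \<otimes> x \<otimes> b \<in> conj_set G A b" using x unfolding conj_set_def by blast
    then obtain y where y: "y \<in> B" "inv b \<otimes> x \<otimes> b = inv a \<otimes> y \<otimes> a"
      using cj unfolding conj_set_def by auto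
    have yc: "y \<in> carrier G" using y sB subgroup.subset by blast
    have "x = b \<otimes> (inv b \<otimes> x \<otimes> b) \<otimes> inv b" using carr by (simp add: m_assoc)
    also have "\<dots> = b \<otimes> (inv a \<otimes> y \<otimes> a) \<otimes> inv b" using y(2) by simp
    finally have eq: "x = b \<otimes> (inv a \<otimes> y \<otimes> a) \<otimes> inv b" .
    have "b \<in> S" "y \<in> S" using BS b y by auto
    then show "x \<in> S" unfolding eq using sS a
      by (meson subgroup.m_closed subgroup.m_inv_closed)
  qed
  have "generate G (A \<union> B) \<subseteq> S" using AS BS sS by (intro generate_subgroup_incl) auto
  then show ?thesis using gen by simp
qed

lemma (in group) conj_transport:
  assumes sA: "subgroup A G" and sB: "subgroup B G" and a: "a \<in> A" and b: "b \<in> B"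
    and cj: "conj_set G B a = conj_set G A b"
  shows "a \<otimes> inv b \<in> carrier G"
    "\<And>y. y \<in> B \<Longrightarrow> \<exists>x\<in>A. y = (a \<otimes> inv b) \<otimes> x \<otimes> inv (a \<otimes> inv b)"
    "\<And>x. x \<in> A \<Longrightarrow> (a \<otimes> inv b) \<otimes> x \<otimes> inv (a \<otimes> inv b) \<in> B"
proof -
  have carr: "a \<in> carrier G" "b \<in> carrier G" using sA sB a b subgroup.subset by blast+
  show "a \<otimes> inv b \<in> carrier G" using carr by simp
  fix y assume y: "y \<in> B"
  have yc: "y \<in> carrier G" using y sB subgroup.subset by blast
  have "inv a \<otimes> y \<otimes> a \<in> conj_set G B a" using y unfolding conj_set_def by blast
  then obtain x where x: "x \<in> A" "inv a \<otimes> y \<otimes> a = inv b \<otimes> x \<otimes> b"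
    using cj unfolding conj_set_def by auto
  have xc: "x \<in> carrier G" using x sA subgroup.subset by blast
  have "y = a \<otimes> (inv a \<otimes> y \<otimes> a) \<otimes> inv a" using carr yc by (simp add: m_assoc)
  also have "\<dots> = a \<otimes> (inv b \<otimes> x \<otimes> b) \<otimes> inv a" using x(2) by simp
  also have "\<dots> = (a \<otimes> inv b) \<otimes> x \<otimes> inv (a \<otimes> inv b)"
    using carr xc by (simp add: m_assoc inv_mult_group)
  finally show "\<exists>x\<in>A. y = (a \<otimes> inv b) \<otimes> x \<otimes> inv (a \<otimes> inv b)" using x(1) by blast
next
  have carr: "a \<in> carrier G" "b \<in> carrier G" using sA sB a b subgroup.subset by blast+
  fix x assume x: "x \<in> A"
  have xc: "x \<in> carrier G" using x sA subgroup.subset by blast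
  have "inv b \<otimes> x \<otimes> b \<in> conj_set G A b" using x unfolding conj_set_def by blast
  then obtain y where y: "y \<in> B" "inv b \<otimes> x \<otimes> b = inv a \<otimes> y \<otimes> a"
    using cj unfolding conj_set_def by auto
  have yc: "y \<in> carrier G" using y sB subgroup.subset by blast
  have "y = a \<otimes> (inv a \<otimes> y \<otimes> a) \<otimes> inv a" using carr yc by (simp add: m_assoc)
  also have "\<dots> = a \<otimes> (inv b \<otimes> x \<otimes> b) \<otimes> inv a" using y(2) by simp
  also have "\<dots> = (a \<otimes> inv b) \<otimes> x \<otimes> inv (a \<otimes> inv b)"
    using carr xc by (simp add: m_assoc inv_mult_group)
  finally show "(a \<otimes> inv b) \<otimes> x \<otimes> inv (a \<otimes> inv b) \<in> B" using y(1) by simp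
qed


lemma (in rmod) main:
  assumes r1: "rank_one_group G A B"
    and h3: "mcomm act (mcomm act (mcomm act UNIV A) A) A = {0}"
    and h5: "mcomm act UNIV (carrier G) = UNIV"
    and h6: "fixed act UNIV (carrier G) = {0}"
    and h7: "centr_on act A (mcomm act UNIV A) \<inter> centr_quot act A (fixed act UNIV A) \<noteq> {\<one>}"
  shows "(fixed act UNIV A \<inter> mcomm act UNIV B = {0}
          \<and> {c + w | c w. c \<in> fixed act UNIV A \<and> w \<in> mcomm act UNIV B} = UNIV)
       \<and> (let A0 = centr_on act A (mcomm act UNIV A) \<inter> centr_quot act A (fixed act UNIV A) in
            fixed act UNIV A = mcomm act UNIV A0
          \<and> (\<forall>a \<in> A0 - {\<one>}. fixed act UNIV A = mcomm act UNIV {a})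
          \<and> (\<forall>a \<in> A0 - {\<one>}. mcomm act UNIV A = fixed act UNIV {a}))
       \<and> (\<not> (\<forall>x \<in> A. \<forall>y \<in> A. x \<otimes> y = y \<otimes> x)
            \<longrightarrow> fixed act UNIV A = mcomm act (mcomm act UNIV A) A)"
proof -
  from r1 have sA: "subgroup A G" and sB: "subgroup B G" and gen: "generate G (A \<union> B) = carrier G"
    and axA: "\<forall>a \<in> A - {\<one>}. \<exists>b \<in> B - {\<one>}. conj_set G B a = conj_set G A b"
    and axB: "\<forall>b \<in> B - {\<one>}. \<exists>a \<in> A - {\<one>}. conj_set G A b = conj_set G B a"
    unfolding rank_one_group_def by blast+
  have Ac: "A \<subseteq> carrier G" and Bc: "B \<subseteq> carrier G" using sA sB subgroup.subset by blast+
  define UA where "UA = fixed act UNIV A"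
  define UB where "UB = fixed act UNIV B"
  define VA where "VA = mcomm act UNIV A"
  define VB where "VB = mcomm act UNIV B"
  define A0 where "A0 = centr_on act A VA \<inter> centr_quot act A UA"
  have UAs: "add_subgroup UA" unfolding UA_def using Ac by (rule fixed_sub)
  have UBs: "add_subgroup UB" unfolding UB_def using Bc by (rule fixed_sub)
  have VAs: "add_subgroup VA" unfolding VA_def by (rule mcomm_sub)
  have VBs: "add_subgroup VB" unfolding VB_def by (rule mcomm_sub)
  have A0D: "a \<in> A \<and> (\<forall>w\<in>VA. act w a = w) \<and> (\<forall>v. act v a - v \<in> UA)" if "a \<in> A0" for a
    using that unfolding A0_def centr_on_def centr_quot_def by auto
  have A0I: "a \<in> A0" if "a \<in> A" "\<forall>w\<in>VA. act w a = w" "\<forall>v. act v a - v \<in> UA" for a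
    using that unfolding A0_def centr_on_def centr_quot_def by auto
  have oneA0: "\<one> \<in> A0"
    using UAs subgroup.one_closed[OF sA] by (intro A0I) (auto simp: add_subgroup_def)
  have "A0 \<noteq> {\<one>}" using h7 unfolding A0_def UA_def VA_def .
  then obtain a0 where a0: "a0 \<in> A0" "a0 \<noteq> \<one>"
    using oneA0 by blast
  have a0A: "a0 \<in> A" using A0D[OF a0(1)] by blast
  have a0c: "a0 \<in> carrier G" using a0A Ac by blast
  have genA: "carrier G \<subseteq> S" if "subgroup S G" "B \<subseteq> S" "a \<in> A" "a \<noteq> \<one>" "a \<in> S" for S a
  proof -
    have "a \<in> A - {\<one>}" using that(3,4) by simp
    from bspec[OF axA this] obtain b where b: "b \<in> B - {\<one>}" and cj: "conj_set G B a = conj_set G A b"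
      by (elim bexE)
    from b have "b \<in> B" by simp
    show ?thesis by (rule gen_from[OF sA sB gen that(1,2,3,5) \<open>b \<in> B\<close> cj])
  qed
  have genB: "carrier G \<subseteq> S" if "subgroup S G" "A \<subseteq> S" "e \<in> B" "e \<noteq> \<one>" "e \<in> S" for S e
  proof -
    have "e \<in> B - {\<one>}" using that(3,4) by simp
    from bspec[OF axB this] obtain a where a: "a \<in> A - {\<one>}" and cj: "conj_set G A e = conj_set G B a"
      by (elim bexE)
    from a have "a \<in> A" by simp
    have gen': "generate G (B \<union> A) = carrier G" using gen by (simp add: Un_commute)
    show ?thesis by (rule gen_from[OF sB sA gen' that(1,2,3,5) \<open>a \<in> A\<close> cj])
  qed
  have fix0: "x = 0" if "carrier G \<subseteq> {g \<in> carrier G. act x g = x}" for x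
  proof -
    have "x \<in> fixed act UNIV (carrier G)" using that unfolding fixed_def by blast
    then show ?thesis using h6 by blast
  qed
  have comm_all: "UNIV \<subseteq> W" if W: "add_subgroup W" "carrier G \<subseteq> {g \<in> carrier G. \<forall>v. act v g - v \<in> W}" for W
  proof -
    have "mcomm act UNIV (carrier G) \<subseteq> W" using W by (intro mcomm_least') auto
    then show ?thesis using h5 by simp
  qed
  have "a0 \<in> A - {\<one>}" using a0A a0(2) by simp
  from bspec[OF axA this] obtain b1' where b1': "b1' \<in> B - {\<one>}" "conj_set G B a0 = conj_set G A b1'"
    by (elim bexE)
  obtain b1 where b1: "b1 \<in> B" "conj_set G B a0 = conj_set G A b1"
    using b1' by (intro that[of b1']) simp_all
  define p where "p = a0 \<otimes> inv b1"
  have pc: "p \<in> carrier G" and pB: "\<And>y. y \<in> B \<Longrightarrow> \<exists>x\<in>A. y = p \<otimes> x \<otimes> inv p"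
    and pA: "\<And>x. x \<in> A \<Longrightarrow> p \<otimes> x \<otimes> inv p \<in> B"
    using conj_transport[OF sA sB a0A b1] unfolding p_def by blast+
  define e where "e = p \<otimes> a0 \<otimes> inv p"
  have eB: "e \<in> B" unfolding e_def using pA a0A by blast
  have ec: "e \<in> carrier G" using eB Bc by blast
  have ne: "e \<noteq> \<one>"
  proof
    assume "e = \<one>"
    have "a0 = inv p \<otimes> (p \<otimes> a0 \<otimes> inv p) \<otimes> p" using pc a0c by (simp add: m_assoc)
    also have "\<dots> = \<one>" using \<open>e = \<one>\<close> pc unfolding e_def by simp
    finally show False using a0 by blast
  qed
  have VBe: "act w e = w" if "w \<in> VB" for w
  proof -
    have "VB \<subseteq> fixed act UNIV {e}"
      unfolding VB_def
    proof (rule mcomm_least'[OF fixed_sub])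
      show "{e} \<subseteq> carrier G" using ec by blast
      fix v y assume y: "y \<in> B"
      obtain x where x: "x \<in> A" "y = p \<otimes> x \<otimes> inv p" using pB y by blast
      have xc: "x \<in> carrier G" using x Ac by blast
      define u where "u = act v p"
      have vu: "v = act u (inv p)" unfolding u_def using pc by simp
      have "act v y - v = act (act u x - u) (inv p)"
        unfolding x(2) using pc xc by (simp add: act_conj act_diff u_def)
      moreover have "act (act u x - u) a0 = act u x - u"
        using A0D[OF a0(1)] mcomm_in'[of u UNIV x A act] x(1) unfolding VA_def by blast
      ultimately have "act (act v y - v) e = act v y - v"
        unfolding e_def using pc a0c by (simp add: act_conj)
      then show "act v y - v \<in> fixed act UNIV {e}" unfolding fixed_def by blast
    qed
    then show ?thesis using that unfolding fixed_def by blast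
  qed
  have transUB: "act z (inv p) \<in> UB" if "z \<in> UA" for z
    unfolding UB_def fixed_def
  proof (safe)
    fix y assume y: "y \<in> B"
    obtain x where x: "x \<in> A" "y = p \<otimes> x \<otimes> inv p" using pB y by blast
    have xc: "x \<in> carrier G" using x Ac by blast
    have "act z x = z" using that x(1) unfolding UA_def fixed_def by blast
    then show "act (act z (inv p)) y = act z (inv p)"
      unfolding x(2) using pc xc by (simp add: act_conj)
  qed simp
  have eUB: "act v e - v \<in> UB" for v
  proof -
    define u where "u = act v p"
    have "act v e - v = act (act u a0 - u) (inv p)"
      unfolding e_def using pc a0c by (simp add: act_conj act_diff u_def)
    moreover have "act u a0 - u \<in> UA" using A0D[OF a0(1)] by blast
    ultimately show ?thesis using transUB by simp
  qed
  have eVUB: "mcomm act UNIV {e} \<subseteq> UB"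
    by (rule mcomm_least'[OF UBs]) (use eUB in auto)
  have Z1: "x = 0" if "x \<in> UA" "x \<in> VB" for x
  proof (rule fix0, rule genB[OF fix_subgroup _ eB ne])
    show "A \<subseteq> {g \<in> carrier G. act x g = x}" using that(1) Ac unfolding UA_def fixed_def by blast
    show "e \<in> {g \<in> carrier G. act x g = x}" using VBe[OF that(2)] ec by blast
  qed
  have Z2: "w = 0" if "a \<in> A0" "a \<noteq> \<one>" "w \<in> UB" "act w a = w" for a w
  proof (rule fix0, rule genA[OF fix_subgroup _ _ that(2)])
    show "B \<subseteq> {g \<in> carrier G. act w g = w}" using that(3) Bc unfolding UB_def fixed_def by blast
    show "a \<in> A" using A0D[OF that(1)] by blast
    then show "a \<in> {g \<in> carrier G. act w g = w}" using that(4) Ac by blast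
  qed
  have D1: "\<exists>x y. v = x + y \<and> x \<in> mcomm act UNIV {a} \<and> y \<in> VB" if "a \<in> A0" "a \<noteq> \<one>" for a v
  proof -
    define W where "W = {x + y | x y. x \<in> mcomm act UNIV {a} \<and> y \<in> VB}"
    have Ws: "add_subgroup W" unfolding W_def using mcomm_sub VBs by (rule add_subgroup_sum)
    have aA: "a \<in> A" using A0D[OF that(1)] by blast
    have "carrier G \<subseteq> {g \<in> carrier G. \<forall>v. act v g - v \<in> W}"
    proof (rule genA[OF comm_subgroup[OF Ws] _ aA that(2)])
      show "B \<subseteq> {g \<in> carrier G. \<forall>v. act v g - v \<in> W}"
      proof (safe)
        fix y v assume y: "y \<in> B"
        show "y \<in> carrier G" using y Bc by blast
        have "act v y - v \<in> VB" unfolding VB_def using y by (rule mcomm_in'[OF UNIV_I])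
        moreover have "(0::'v) \<in> mcomm act UNIV {a}" using mcomm_sub unfolding add_subgroup_def by blast
        ultimately show "act v y - v \<in> W" unfolding W_def by force
      qed
      show "a \<in> {g \<in> carrier G. \<forall>v. act v g - v \<in> W}"
      proof (safe)
        show "a \<in> carrier G" using aA Ac by blast
        fix v
        have "act v a - v \<in> mcomm act UNIV {a}" by (rule mcomm_in') auto
        moreover have "(0::'v) \<in> VB" using VBs unfolding add_subgroup_def by blast
        ultimately show "act v a - v \<in> W" unfolding W_def by force
      qed
    qed
    then have "UNIV \<subseteq> W" using comm_all Ws by blast
    then show ?thesis unfolding W_def by blast
  qed
  have D2: "\<exists>x y. v = x + y \<and> x \<in> mcomm act UNIV {e} \<and> y \<in> VA" for v
  proof -
    define W where "W = {x + y | x y. x \<in> mcomm act UNIV {e} \<and> y \<in> VA}"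
    have Ws: "add_subgroup W" unfolding W_def using mcomm_sub VAs by (rule add_subgroup_sum)
    have "carrier G \<subseteq> {g \<in> carrier G. \<forall>v. act v g - v \<in> W}"
    proof (rule genB[OF comm_subgroup[OF Ws] _ eB ne])
      show "A \<subseteq> {g \<in> carrier G. \<forall>v. act v g - v \<in> W}"
      proof (safe)
        fix y v assume y: "y \<in> A"
        show "y \<in> carrier G" using y Ac by blast
        have "act v y - v \<in> VA" unfolding VA_def using y by (rule mcomm_in'[OF UNIV_I])
        moreover have "(0::'v) \<in> mcomm act UNIV {e}" using mcomm_sub unfolding add_subgroup_def by blast
        ultimately show "act v y - v \<in> W" unfolding W_def by force
      qed
      show "e \<in> {g \<in> carrier G. \<forall>v. act v g - v \<in> W}"
      proof (safe)
        show "e \<in> carrier G" using ec .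
        fix v
        have "act v e - v \<in> mcomm act UNIV {e}" by (rule mcomm_in') auto
        moreover have "(0::'v) \<in> VA" using VAs unfolding add_subgroup_def by blast
        ultimately show "act v e - v \<in> W" unfolding W_def by force
      qed
    qed
    then have "UNIV \<subseteq> W" using comm_all Ws by blast
    then show ?thesis unfolding W_def by blast
  qed
  have aUA: "mcomm act UNIV {a} \<subseteq> UA" if "a \<in> A0" for a
    by (rule mcomm_least'[OF UAs]) (use A0D[OF that] in auto)
  have UAa: "UA = mcomm act UNIV {a}" if "a \<in> A0" "a \<noteq> \<one>" for a
  proof
    show "mcomm act UNIV {a} \<subseteq> UA" using aUA[OF that(1)] .
    show "UA \<subseteq> mcomm act UNIV {a}"
    proof
      fix u assume u: "u \<in> UA"
      have d: "\<exists>x y. u = x + y \<and> x \<in> mcomm act UNIV {a} \<and> y \<in> VB" using D1[OF that] .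
      obtain x y where xy: "u = x + y" "x \<in> mcomm act UNIV {a}" "y \<in> VB" using d by blast
      have "y = u - x" using xy by simp
      moreover have "x \<in> UA" using xy aUA[OF that(1)] by blast
      ultimately have "y \<in> UA" using add_sub_diff[OF UAs u] by simp
      then have "y = 0" using Z1 xy by blast
      then show "u \<in> mcomm act UNIV {a}" using xy by simp
    qed
  qed
  have partb: "UA = mcomm act UNIV A0"
  proof
    have "mcomm act UNIV {a0} \<subseteq> mcomm act UNIV A0" using a0 by (intro mcomm_mono) auto
    then show "UA \<subseteq> mcomm act UNIV A0" using UAa[OF a0] by simp
    show "mcomm act UNIV A0 \<subseteq> UA" by (rule mcomm_least'[OF UAs]) (use A0D in auto)
  qed
  have partc: "VA = fixed act UNIV {a}" if "a \<in> A0" "a \<noteq> \<one>" for a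
  proof
    show "VA \<subseteq> fixed act UNIV {a}" using A0D[OF that(1)] unfolding fixed_def by blast
    show "fixed act UNIV {a} \<subseteq> VA"
    proof
      fix v assume v: "v \<in> fixed act UNIV {a}"
      then have va: "act v a = v" unfolding fixed_def by blast
      have ac: "a \<in> carrier G" using A0D[OF that(1)] Ac by blast
      obtain x y where xy: "v = x + y" "x \<in> mcomm act UNIV {e}" "y \<in> VA" using D2 by blast
      have ya: "act y a = y" using A0D[OF that(1)] xy(3) by blast
      have "x = v - y" using xy by simp
      then have "act x a = x" using va ya ac by (simp add: act_diff)
      moreover have "x \<in> UB" using xy eVUB by blast
      ultimately have "x = 0" using Z2[OF that] by blast
      then show "v \<in> VA" using xy by simp
    qed
  qed
  have parta: "UA \<inter> VB = {0} \<and> {c + w | c w. c \<in> UA \<and> w \<in> VB} = UNIV"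
  proof
    show "UA \<inter> VB = {0}" using Z1 UAs VBs unfolding add_subgroup_def by blast
    show "{c + w | c w. c \<in> UA \<and> w \<in> VB} = UNIV"
    proof (safe)
      fix v :: 'v
      obtain x y where "v = x + y" "x \<in> mcomm act UNIV {a0}" "y \<in> VB" using D1[OF a0] by blast
      then show "\<exists>c w. v = c + w \<and> c \<in> UA \<and> w \<in> VB" using aUA[OF a0(1)] by blast
    qed simp
  qed
  have partd: "UA = mcomm act VA A" if nab: "\<not> (\<forall>x \<in> A. \<forall>y \<in> A. x \<otimes> y = y \<otimes> x)"
  proof -
    obtain x y where xy: "x \<in> A" "y \<in> A" "x \<otimes> y \<noteq> y \<otimes> x" using nab by blast
    have xc: "x \<in> carrier G" and yc: "y \<in> carrier G" using xy Ac by blast+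
    define c where "c = inv x \<otimes> inv y \<otimes> x \<otimes> y"
    have cc: "c \<in> carrier G" unfolding c_def using xc yc by simp
    have cA: "c \<in> A" unfolding c_def using xy sA
      by (meson subgroup.m_closed subgroup.m_inv_closed)
    have cne: "c \<noteq> \<one>"
    proof
      assume "c = \<one>"
      have "y \<otimes> x \<otimes> c = x \<otimes> y" unfolding c_def using xc yc by (simp add: m_assoc)
      then show False using \<open>c = \<one>\<close> xy(3) xc yc by simp
    qed
    define VAA where "VAA = mcomm act VA A"
    have VAAs: "add_subgroup VAA" unfolding VAA_def by (rule mcomm_sub)
    have VAAUA: "VAA \<subseteq> UA"
    proof
      fix g assume g: "g \<in> VAA"
      have "act g x' = g" if "x' \<in> A" for x'
      proof -
        have "act g x' - g \<in> mcomm act VAA A" using g that by (rule mcomm_in')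
        then show ?thesis using h3 unfolding VAA_def VA_def by simp
      qed
      then show "g \<in> UA" unfolding UA_def fixed_def by blast
    qed
    have VAinv: "act w g \<in> VA" if "w \<in> VA" "g \<in> A" for w g
    proof -
      have "act w g - w \<in> VA" unfolding VA_def using that(2) by (rule mcomm_in'[OF UNIV_I])
      then have "(act w g - w) + w \<in> VA" using that(1) VAs unfolding add_subgroup_def by blast
      then show ?thesis by simp
    qed
    have keyc: "act v c - v \<in> mcomm act (mcomm act S A) A" if "act v (inv x \<otimes> inv y) \<in> S" for v S
    proof -
      define w' where "w' = act v (inv x \<otimes> inv y)"
      have w': "w' \<in> S" using that unfolding w'_def .
      have g1: "act (act w' x - w') y - (act w' x - w') \<in> mcomm act (mcomm act S A) A"
        by (rule mcomm_in'[OF mcomm_in'[OF w' xy(1)] xy(2)])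
      have g2: "act (act w' y - w') x - (act w' y - w') \<in> mcomm act (mcomm act S A) A"
        by (rule mcomm_in'[OF mcomm_in'[OF w' xy(2)] xy(1)])
      have "act v c - v = (act (act w' x - w') y - (act w' x - w')) - (act (act w' y - w') x - (act w' y - w'))"
        unfolding c_def w'_def by (rule comm_identity[OF xc yc])
      then show ?thesis using add_sub_diff[OF mcomm_sub g1 g2] by simp
    qed
    have cA0: "c \<in> A0"
    proof (rule A0I[OF cA])
      show "\<forall>w\<in>VA. act w c = w"
      proof
        fix w assume w: "w \<in> VA"
        have "act w (inv x \<otimes> inv y) \<in> VA" using w xc yc xy
          by (simp add: act_mult VAinv sA subgroup.m_inv_closed)
        then have "act w c - w \<in> mcomm act (mcomm act VA A) A" by (rule keyc)
        then show "act w c = w" using h3 unfolding VA_def by simp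
      qed
      show "\<forall>v. act v c - v \<in> UA"
      proof
        fix v
        have "act v c - v \<in> mcomm act (mcomm act UNIV A) A" by (rule keyc) simp
        then show "act v c - v \<in> UA" using VAAUA unfolding VAA_def VA_def by blast
      qed
    qed
    have "mcomm act UNIV {c} \<subseteq> VAA"
    proof (rule mcomm_least'[OF VAAs])
      fix v g assume "g \<in> {c}"
      have "act v c - v \<in> mcomm act (mcomm act UNIV A) A" by (rule keyc) simp
      then show "act v g - v \<in> VAA" using \<open>g \<in> {c}\<close> unfolding VAA_def VA_def by simp
    qed
    then have "UA \<subseteq> VAA" using UAa[OF cA0 cne] by simp
    then show ?thesis using VAAUA unfolding VAA_def by blast
  qed
  have c2: "\<forall>a\<in>A0 - {\<one>}. UA = mcomm act UNIV {a}" using UAa by blast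
  have c3: "\<forall>a\<in>A0 - {\<one>}. VA = fixed act UNIV {a}" using partc by blast
  have c4: "\<not> (\<forall>x \<in> A. \<forall>y \<in> A. x \<otimes> y = y \<otimes> x) \<longrightarrow> UA = mcomm act VA A"
    using partd by blast
  have final: "(UA \<inter> VB = {0} \<and> {c + w | c w. c \<in> UA \<and> w \<in> VB} = UNIV)
     \<and> (UA = mcomm act UNIV A0 \<and> (\<forall>a\<in>A0 - {\<one>}. UA = mcomm act UNIV {a})
         \<and> (\<forall>a\<in>A0 - {\<one>}. VA = fixed act UNIV {a}))
     \<and> (\<not> (\<forall>x \<in> A. \<forall>y \<in> A. x \<otimes> y = y \<otimes> x) \<longrightarrow> UA = mcomm act VA A)"
    by (intro conjI parta partb c2 c3 c4)
  show ?thesis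
    using final unfolding Let_def UA_def UB_def VA_def VB_def A0_def .
qed

theorem lemma3p11:
  fixes G :: "('g, 'b) monoid_scheme" and A B :: "'g set"
    and act :: "'v::ab_group_add \<Rightarrow> 'g \<Rightarrow> 'v"
  assumes "rank_one_group G A B"
    and "ZG_module G act"
    and "mcomm act (mcomm act (mcomm act UNIV A) A) A = {0}"
    and "mcomm act (mcomm act (mcomm act UNIV (carrier G)) (carrier G)) (carrier G) \<noteq> {0}"
    and "mcomm act UNIV (carrier G) = UNIV"
    and "fixed act UNIV (carrier G) = {0}"
    and "centr_on act A (mcomm act UNIV A) \<inter> centr_quot act A (fixed act UNIV A) \<noteq> {monoid.one G}"
  shows "(fixed act UNIV A \<inter> mcomm act UNIV B = {0}
          \<and> {c + w | c w. c \<in> fixed act UNIV A \<and> w \<in> mcomm act UNIV B} = UNIV)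
       \<and> (let A0 = centr_on act A (mcomm act UNIV A) \<inter> centr_quot act A (fixed act UNIV A) in
            fixed act UNIV A = mcomm act UNIV A0
          \<and> (\<forall>a \<in> A0 - {monoid.one G}. fixed act UNIV A = mcomm act UNIV {a})
          \<and> (\<forall>a \<in> A0 - {monoid.one G}. mcomm act UNIV A = fixed act UNIV {a}))
       \<and> (\<not> (\<forall>x \<in> A. \<forall>y \<in> A. monoid.mult G x y = monoid.mult G y x)
            \<longrightarrow> fixed act UNIV A = mcomm act (mcomm act UNIV A) A)"
proof -
  have grp: "group G" using assms(1) unfolding rank_one_group_def by blast
  interpret rmod G act
    by (rule rmod.intro[OF grp]) (rule rmod_axioms.intro, rule assms(2))
  show ?thesis by (rule main[OF assms(1,3,5,6,7)])
qed

end
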